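(* Let $G$ be a finite group, let $N$ be a minimal normal subgroup of $G$, and let $i\ge 1$. If $N$ contains no non-trivial element of $G_{\delta_i}$ (i.e. $N\cap G_{\delta_i}\subseteq\{1\}$), then $[N,G^{(i-1)}]=1$.
   Context: Commutators are $[x,y]=x^{-1}y^{-1}xy$. The derived words $\delta_i$, in $2^i$ indeterminates, are defined by $\delta_0=x_1$ and $\delta_i=[\delta_{i-1}(x_1,\dots,x_{2^{i-1}}),\,\delta_{i-1}(x_{2^{i-1}+1},\dots,x_{2^i})]$ for $i\ge1$. $G_{\delta_i}$ denotes the set of all values of $\delta_i$ in $G$, and $G^{(j)}$ is the $j$th term of the derived series of $G$ ($G^{(0)}=G$, $G^{(j)}=[G^{(j-1)},G^{(j-1)}]$), so that $G^{(j)}=\langle G_{\delta_j}\rangle$. *)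

theory Defs
  imports "HOL-Algebra.Algebra"
begin

definition grp_comm :: "('a, 'b) monoid_scheme \<Rightarrow> 'a \<Rightarrow> 'a \<Rightarrow> 'a" where
  "grp_comm G x y = inv\<^bsub>G\<^esub> x \<otimes>\<^bsub>G\<^esub> inv\<^bsub>G\<^esub> y \<otimes>\<^bsub>G\<^esub> x \<otimes>\<^bsub>G\<^esub> y"

text \<open>Derived word delta_i evaluated at an assignment x of the indeterminates
  x_1, x_2, ... (here indexed from 0: x 0, x 1, ...); delta_i uses x 0 .. x (2^i - 1).\<close>
fun delta_word :: "('a, 'b) monoid_scheme \<Rightarrow> nat \<Rightarrow> (nat \<Rightarrow> 'a) \<Rightarrow> 'a" where
  "delta_word G 0 x = x 0"
| "delta_word G (Suc i) x =
     grp_comm G (delta_word G i x) (delta_word G i (\<lambda>k. x (k + 2 ^ i)))"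

definition delta_values :: "('a, 'b) monoid_scheme \<Rightarrow> nat \<Rightarrow> 'a set" where
  "delta_values G i = {delta_word G i x | x. \<forall>k < 2 ^ i. x k \<in> carrier G}"

definition comm_subgroup :: "('a, 'b) monoid_scheme \<Rightarrow> 'a set \<Rightarrow> 'a set \<Rightarrow> 'a set" where
  "comm_subgroup G A B = generate G {grp_comm G a b | a b. a \<in> A \<and> b \<in> B}"

definition derived_term :: "('a, 'b) monoid_scheme \<Rightarrow> nat \<Rightarrow> 'a set" where
  "derived_term G j = (derived G ^^ j) (carrier G)"

definition minimal_normal :: "'a set \<Rightarrow> ('a, 'b) monoid_scheme \<Rightarrow> bool" where
  "minimal_normal N G \<longleftrightarrow> N \<lhd> G \<and> N \<noteq> {\<one>\<^bsub>G\<^esub>} \<and>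
     (\<forall>M. M \<lhd> G \<and> M \<subseteq> N \<longrightarrow> M = {\<one>\<^bsub>G\<^esub>} \<or> M = N)"

end

theory Submission imports Defs begin
context group begin
lemma rcanc1[simp]: "\<lbrakk>x \<in> carrier G; y \<in> carrier G\<rbrakk> \<Longrightarrow> x \<otimes> (inv x \<otimes> y) = y"
  by (simp add: m_assoc[symmetric])
lemma rcanc2[simp]: "\<lbrakk>x \<in> carrier G; y \<in> carrier G\<rbrakk> \<Longrightarrow> inv x \<otimes> (x \<otimes> y) = y"
  by (simp add: m_assoc[symmetric])
lemma conj_mult: "\<lbrakk>h \<in> carrier G; a \<in> carrier G; b \<in> carrier G\<rbrakk> \<Longrightarrow>
  inv h \<otimes> a \<otimes> h \<otimes> (inv h \<otimes> b \<otimes> h) = inv h \<otimes> (a \<otimes> b) \<otimes> h"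
  by (simp add: m_assoc)
lemma comm_eng: "\<lbrakk>x \<in> carrier G; y \<in> carrier G; b \<in> carrier G\<rbrakk> \<Longrightarrow>
  grp_comm G (x \<otimes> y) b = inv y \<otimes> grp_comm G x b \<otimes> y \<otimes> grp_comm G y b"
  by (simp add: grp_comm_def m_assoc inv_mult_group)
lemma comm_eng2: "\<lbrakk>x \<in> carrier G; y \<in> carrier G; a \<in> carrier G\<rbrakk> \<Longrightarrow>
  grp_comm G a (x \<otimes> y) = grp_comm G a y \<otimes> (inv y \<otimes> grp_comm G a x \<otimes> y)"
  by (simp add: grp_comm_def m_assoc inv_mult_group)
lemma comm_inv1: "\<lbrakk>a \<in> carrier G; b \<in> carrier G\<rbrakk> \<Longrightarrow>
  grp_comm G (inv a) b = inv (inv a) \<otimes> inv (grp_comm G a b) \<otimes> inv a"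
  by (simp add: grp_comm_def m_assoc inv_mult_group)
lemma comm_inv2: "\<lbrakk>a \<in> carrier G; b \<in> carrier G\<rbrakk> \<Longrightarrow>
  grp_comm G a (inv b) = inv (inv b) \<otimes> inv (grp_comm G a b) \<otimes> inv b"
  by (simp add: grp_comm_def m_assoc inv_mult_group)
lemma conj_comm: "\<lbrakk>h \<in> carrier G; a \<in> carrier G; b \<in> carrier G\<rbrakk> \<Longrightarrow>
  inv h \<otimes> grp_comm G a b \<otimes> h = grp_comm G (inv h \<otimes> a \<otimes> h) (inv h \<otimes> b \<otimes> h)"
  by (simp add: grp_comm_def m_assoc inv_mult_group)
lemma comm_one_imp: "\<lbrakk>a \<in> carrier G; b \<in> carrier G; grp_comm G a b = \<one>\<rbrakk> \<Longrightarrow> a \<otimes> b = b \<otimes> a"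
  unfolding grp_comm_def
  by (metis inv_mult_group inv_equality m_assoc m_closed inv_closed inv_inv)
lemma comm_imp_one: "\<lbrakk>a \<in> carrier G; b \<in> carrier G; a \<otimes> b = b \<otimes> a\<rbrakk> \<Longrightarrow> grp_comm G a b = \<one>"
  unfolding grp_comm_def by (simp add: m_assoc)

lemma delta_carrier: "(\<forall>k<2^i. x k \<in> carrier G) \<Longrightarrow> delta_word G i x \<in> carrier G"
proof (induction i arbitrary: x)
  case 0 then show ?case by simp
next
  case (Suc i)
  have a: "\<forall>k<2^i. x k \<in> carrier G" using Suc.prems by simp
  have b: "\<forall>k<2^i. x (k + 2^i) \<in> carrier G" using Suc.prems by simp
  show ?case using Suc.IH[OF a] Suc.IH[OF b] by (simp add: grp_comm_def)
qed

lemma delta_values_carrier: "delta_values G i \<subseteq> carrier G"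
  unfolding delta_values_def using delta_carrier by blast

lemma delta_values_0: "delta_values G 0 = carrier G"
proof
  show "carrier G \<subseteq> delta_values G 0"
  proof
    fix g assume "g \<in> carrier G"
    then show "g \<in> delta_values G 0" unfolding delta_values_def
      by (intro CollectI exI[of _ "\<lambda>_. g"]) simp
  qed
qed (rule delta_values_carrier)

lemma delta_conj: "h \<in> carrier G \<Longrightarrow> (\<forall>k<2^i. x k \<in> carrier G) \<Longrightarrow>
  inv h \<otimes> delta_word G i x \<otimes> h = delta_word G i (\<lambda>k. inv h \<otimes> x k \<otimes> h)"
proof (induction i arbitrary: x)
  case 0 then show ?case by simp
next
  case (Suc i)
  have a: "\<forall>k<2^i. x k \<in> carrier G" using Suc.prems by simp
  have b: "\<forall>k<2^i. x (k + 2^i) \<in> carrier G" using Suc.prems by simp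
  show ?case
    using Suc.IH[OF Suc.prems(1) a] Suc.IH[OF Suc.prems(1) b]
      conj_comm[OF Suc.prems(1) delta_carrier[OF a] delta_carrier[OF b]]
    by simp
qed

lemma delta_values_conj: "g \<in> delta_values G i \<Longrightarrow> h \<in> carrier G \<Longrightarrow>
  inv h \<otimes> g \<otimes> h \<in> delta_values G i"
proof -
  assume g: "g \<in> delta_values G i" and h: "h \<in> carrier G"
  then obtain x where x: "\<forall>k<2^i. x k \<in> carrier G" "g = delta_word G i x"
    unfolding delta_values_def by blast
  show ?thesis unfolding delta_values_def using delta_conj[OF h x(1)] x h
    by (intro CollectI exI[of _ "\<lambda>k. inv h \<otimes> x k \<otimes> h"]) auto
qed

end

lemma delta_cong: "(\<forall>k<2^i. x k = y k) \<Longrightarrow> delta_word G i x = delta_word G i y"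
proof (induction i arbitrary: x y)
  case 0 then show ?case by simp
next
  case (Suc i)
  have a: "\<forall>k<2^i. x k = y k" using Suc.prems by simp
  have b: "\<forall>k<2^i. x (k + 2^i) = y (k + 2^i)" using Suc.prems by simp
  show ?case using Suc.IH[OF a] Suc.IH[OF b] by simp
qed

lemma delta_values_comm: "a \<in> delta_values G i \<Longrightarrow> b \<in> delta_values G i \<Longrightarrow>
  grp_comm G a b \<in> delta_values G (Suc i)"
proof -
  assume "a \<in> delta_values G i" "b \<in> delta_values G i"
  then obtain x y where x: "\<forall>k<2^i. x k \<in> carrier G" "a = delta_word G i x"
    and y: "\<forall>k<2^i. y k \<in> carrier G" "b = delta_word G i y"
    unfolding delta_values_def by blast
  define z where "z = (\<lambda>k. if k < 2^i then x k else y (k - 2^i))"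
  have z1: "delta_word G i z = a" unfolding x(2) by (rule delta_cong) (simp add: z_def)
  have z2: "delta_word G i (\<lambda>k. z (k + 2^i)) = b" unfolding y(2) by (rule delta_cong) (simp add: z_def)
  have zc: "\<forall>k<2^(Suc i). z k \<in> carrier G"
    using x(1) y(1) by (auto simp: z_def)
  show ?thesis unfolding delta_values_def using z1 z2 zc
    by (intro CollectI exI[of _ z]) simp
qed

context group begin

lemma gen_conj:
  assumes D: "D \<subseteq> carrier G" and cl: "\<And>d h. d \<in> D \<Longrightarrow> h \<in> carrier G \<Longrightarrow> inv h \<otimes> d \<otimes> h \<in> D"
    and h: "h \<in> carrier G" and a: "a \<in> generate G D"
  shows "inv h \<otimes> a \<otimes> h \<in> generate G D"
  using a
proof (induction rule: generate.induct)
  case one then show ?case using h by (simp add: generate.one)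
next
  case (incl d) then show ?case using cl h by (simp add: generate.incl)
next
  case (inv d)
  have "d \<in> carrier G" using inv D by auto
  then have "inv h \<otimes> inv d \<otimes> h = inv (inv h \<otimes> d \<otimes> h)"
    using h by (simp add: inv_mult_group m_assoc)
  then show ?case using generate.inv[OF cl[OF inv h]] by simp
next
  case (eng x y)
  have xc: "x \<in> carrier G" "y \<in> carrier G" using eng generate_in_carrier[OF D] by auto
  show ?case using generate.eng[OF eng.IH] conj_mult[OF h xc] by simp
qed

lemma gen_comm:
  assumes D: "D \<subseteq> carrier G" and F: "F \<subseteq> carrier G"
    and clF: "\<And>d h. d \<in> F \<Longrightarrow> h \<in> carrier G \<Longrightarrow> inv h \<otimes> d \<otimes> h \<in> F"
    and DF: "\<And>a b. a \<in> D \<Longrightarrow> b \<in> D \<Longrightarrow> grp_comm G a b \<in> F"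
    and a: "a \<in> generate G D" and b: "b \<in> generate G D"
  shows "grp_comm G a b \<in> generate G F"
proof -
  let ?E = "generate G F"
  have sE: "subgroup ?E G" using generate_is_subgroup[OF F] .
  have cE: "\<And>e h. e \<in> ?E \<Longrightarrow> h \<in> carrier G \<Longrightarrow> inv h \<otimes> e \<otimes> h \<in> ?E"
    using gen_conj[OF F clF] by blast
  have Ec: "\<And>e. e \<in> ?E \<Longrightarrow> e \<in> carrier G" using generate_in_carrier[OF F] by blast
  have step1: "grp_comm G a b \<in> ?E" if a: "a \<in> generate G D" and b: "b \<in> D" for a b
    using a
  proof (induction rule: generate.induct)
    case one
    have "grp_comm G \<one> b = \<one>" using b D by (intro comm_imp_one) auto
    then show ?case by (simp add: generate.one)
  next
    case (incl d) then show ?case using DF b by (simp add: generate.incl)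
  next
    case (inv d)
    have dc: "d \<in> carrier G" "b \<in> carrier G" using inv b D by auto
    have "inv (grp_comm G d b) \<in> ?E" by (rule subgroup.m_inv_closed[OF sE generate.incl[OF DF[OF inv b]]])
    then show ?case unfolding comm_inv1[OF dc] by (rule cE) (simp add: dc)
  next
    case (eng x y)
    have xc: "x \<in> carrier G" "y \<in> carrier G" "b \<in> carrier G"
      using eng b D generate_in_carrier[OF D] by auto
    show ?case unfolding comm_eng[OF xc]
      by (rule subgroup.m_closed[OF sE cE[OF eng.IH(1) xc(2)] eng.IH(2)])
  qed
  show ?thesis using b
  proof (induction rule: generate.induct)
    case one
    have "grp_comm G a \<one> = \<one>" using a generate_in_carrier[OF D] by (intro comm_imp_one) auto
    then show ?case by (simp add: generate.one)
  next
    case (incl d) then show ?case by (rule step1[OF a])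
  next
    case (inv d)
    have dc: "a \<in> carrier G" "d \<in> carrier G" using inv a D generate_in_carrier[OF D] by auto
    have "inv (grp_comm G a d) \<in> ?E" by (rule subgroup.m_inv_closed[OF sE step1[OF a inv]])
    then show ?case unfolding comm_inv2[OF dc] by (rule cE) (simp add: dc)
  next
    case (eng x y)
    have xc: "x \<in> carrier G" "y \<in> carrier G" "a \<in> carrier G"
      using eng a D generate_in_carrier[OF D] by auto
    show ?case unfolding comm_eng2[OF xc]
      by (rule subgroup.m_closed[OF sE eng.IH(2) cE[OF eng.IH(1) xc(2)]])
  qed
qed

lemma derived_sub_gen: "derived_term G k \<subseteq> generate G (delta_values G k)"
proof (induction k)
  case 0
  then show ?case by (auto simp: derived_term_def delta_values_0 intro: generate.incl)
next
  case (Suc k)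
  let ?D = "delta_values G k" and ?F = "delta_values G (Suc k)"
  have sub: "derived_term G k \<subseteq> carrier G"
    unfolding derived_term_def using exp_of_derived_in_carrier by blast
  have "derived_term G (Suc k) = derived G (derived_term G k)"
    by (simp add: derived_term_def)
  also have "\<dots> \<subseteq> generate G ?F"
    unfolding derived_def
  proof (rule generate_subgroup_incl[OF _ generate_is_subgroup[OF delta_values_carrier]])
    show "derived_set G (derived_term G k) \<subseteq> generate G ?F"
    proof clarify
      fix h1 h2 assume h: "h1 \<in> derived_term G k" "h2 \<in> derived_term G k"
      have hc: "h1 \<in> carrier G" "h2 \<in> carrier G" using h sub by auto
      have gi: "inv h1 \<in> generate G ?D" "inv h2 \<in> generate G ?D"
        using h Suc.IH generate_m_inv_closed[OF delta_values_carrier] by auto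
      have "grp_comm G (inv h1) (inv h2) \<in> generate G ?F"
        by (rule gen_comm[OF delta_values_carrier delta_values_carrier delta_values_conj
              delta_values_comm gi]) auto
      moreover have "grp_comm G (inv h1) (inv h2) = h1 \<otimes> h2 \<otimes> inv h1 \<otimes> inv h2"
        using hc by (simp add: grp_comm_def)
      ultimately show "h1 \<otimes> h2 \<otimes> inv h1 \<otimes> inv h2 \<in> generate G ?F" by simp
    qed
  qed
  finally show ?case .
qed

end

context group begin

lemma comm_inv_lemma:
  assumes "a \<in> carrier G" "n \<in> carrier G" "n \<otimes> a = a \<otimes> n"
  shows "n \<otimes> inv a = inv a \<otimes> n"
proof -
  have "inv a \<otimes> (n \<otimes> a) \<otimes> inv a = inv a \<otimes> (a \<otimes> n) \<otimes> inv a" using assms(3) by simp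
  then show ?thesis using assms(1,2) by (simp add: m_assoc)
qed

lemma centralizer_sub:
  assumes "N \<subseteq> carrier G"
  shows "subgroup {h \<in> carrier G. \<forall>n\<in>N. n \<otimes> h = h \<otimes> n} G"
proof (rule subgroupI)
  have "\<one> \<in> {h \<in> carrier G. \<forall>n\<in>N. n \<otimes> h = h \<otimes> n}" using assms by auto
  then show "{h \<in> carrier G. \<forall>n\<in>N. n \<otimes> h = h \<otimes> n} \<noteq> {}" by blast
next
  fix a assume a: "a \<in> {h \<in> carrier G. \<forall>n\<in>N. n \<otimes> h = h \<otimes> n}"
  show "inv a \<in> {h \<in> carrier G. \<forall>n\<in>N. n \<otimes> h = h \<otimes> n}"
  proof (clarify, intro conjI ballI)
    fix n assume n: "n \<in> N"
    then have nc: "n \<in> carrier G" using assms by auto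
    have "n \<otimes> a = a \<otimes> n" using a n by blast
    then show "n \<otimes> inv a = inv a \<otimes> n" using a nc comm_inv_lemma by blast
  qed (use a in auto)
next
  fix a b assume a: "a \<in> {h \<in> carrier G. \<forall>n\<in>N. n \<otimes> h = h \<otimes> n}"
    and b: "b \<in> {h \<in> carrier G. \<forall>n\<in>N. n \<otimes> h = h \<otimes> n}"
  show "a \<otimes> b \<in> {h \<in> carrier G. \<forall>n\<in>N. n \<otimes> h = h \<otimes> n}"
  proof (clarify, intro conjI ballI)
    fix n assume n: "n \<in> N"
    then have nc: "n \<in> carrier G" using assms by auto
    have ac: "a \<in> carrier G" "b \<in> carrier G" using a b by auto
    have e1: "n \<otimes> a = a \<otimes> n" using a n by blast
    have e2: "n \<otimes> b = b \<otimes> n" using b n by blast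
    have "n \<otimes> (a \<otimes> b) = (n \<otimes> a) \<otimes> b" using ac nc by (simp only: m_assoc)
    also have "\<dots> = a \<otimes> (n \<otimes> b)" using ac nc by (simp only: e1 m_assoc)
    also have "\<dots> = a \<otimes> (b \<otimes> n)" by (simp only: e2)
    finally show "n \<otimes> (a \<otimes> b) = a \<otimes> b \<otimes> n" using ac nc by (simp only: m_assoc)
  qed (use a b in auto)
qed (auto)

lemma key_step:
  assumes mn: "minimal_normal N G"
    and hyp: "N \<inter> delta_values G (Suc k) \<subseteq> {\<one>}"
    and a: "a \<in> N" "a \<in> delta_values G k" "a \<noteq> \<one>"
  shows "\<forall>n\<in>N. \<forall>h\<in>derived_term G k. n \<otimes> h = h \<otimes> n"
proof -
  have nN: "N \<lhd> G" using mn by (simp add: minimal_normal_def)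
  have sN: "subgroup N G" using nN normal_imp_subgroup by blast
  have Nc: "N \<subseteq> carrier G" using sN subgroup.subset by blast
  have Nconj: "\<And>x n. x \<in> carrier G \<Longrightarrow> n \<in> N \<Longrightarrow> x \<otimes> n \<otimes> inv x \<in> N"
    using nN normal_inv_iff by blast
  have Nconj': "\<And>x n. x \<in> carrier G \<Longrightarrow> n \<in> N \<Longrightarrow> inv x \<otimes> n \<otimes> x \<in> N"
  proof -
    fix x n assume x: "x \<in> carrier G" and n: "n \<in> N"
    show "inv x \<otimes> n \<otimes> x \<in> N" using Nconj[OF inv_closed[OF x] n] x by simp
  qed
  let ?D = "delta_values G k"
  let ?C = "{n \<in> N. \<forall>g\<in>?D. n \<otimes> g = g \<otimes> n}"
  have Dc: "?D \<subseteq> carrier G" by (rule delta_values_carrier)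
  have aC: "a \<in> ?C"
  proof (clarify, intro conjI ballI)
    fix g assume g: "g \<in> ?D"
    have ac: "a \<in> carrier G" "g \<in> carrier G" using a Nc g Dc by auto
    have c1: "grp_comm G a g \<in> delta_values G (Suc k)" using delta_values_comm[OF a(2) g] .
    have "grp_comm G a g = inv a \<otimes> (inv g \<otimes> a \<otimes> g)"
      using ac by (simp add: grp_comm_def m_assoc)
    moreover have "inv a \<otimes> (inv g \<otimes> a \<otimes> g) \<in> N"
      using subgroup.m_closed[OF sN subgroup.m_inv_closed[OF sN a(1)] Nconj'[OF ac(2) a(1)]] .
    ultimately have "grp_comm G a g \<in> N" by simp
    with c1 hyp have "grp_comm G a g = \<one>" by blast
    then show "a \<otimes> g = g \<otimes> a" using comm_one_imp ac by blast
  qed (use a in auto)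
  have Cn: "?C \<lhd> G"
    unfolding normal_inv_iff
  proof (intro conjI ballI)
    show "subgroup ?C G"
    proof (rule subgroupI)
      show "?C \<subseteq> carrier G" using Nc by auto
      show "?C \<noteq> {}" using aC by auto
    next
      fix x assume x: "x \<in> ?C"
      have xc: "x \<in> carrier G" using x Nc by auto
      show "inv x \<in> ?C"
      proof (clarify, intro conjI ballI)
        show "inv x \<in> N" using x subgroup.m_inv_closed[OF sN] by auto
        fix g assume g: "g \<in> ?D"
        have e: "x \<otimes> g = g \<otimes> x" using x g by blast
        have gc: "g \<in> carrier G" using g Dc by blast
        have "g \<otimes> inv x = inv x \<otimes> g" using comm_inv_lemma[OF xc gc e[symmetric]] .
        then show "inv x \<otimes> g = g \<otimes> inv x" by simp
      qed
    next
      fix x y assume x: "x \<in> ?C" and y: "y \<in> ?C"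
      have xc: "x \<in> carrier G" "y \<in> carrier G" using x y Nc by auto
      show "x \<otimes> y \<in> ?C"
      proof (clarify, intro conjI ballI)
        show "x \<otimes> y \<in> N" using x y subgroup.m_closed[OF sN] by auto
        fix g assume g: "g \<in> ?D"
        have gc: "g \<in> carrier G" using g Dc by auto
        have "x \<otimes> y \<otimes> g = x \<otimes> (y \<otimes> g)" using xc gc by (simp add: m_assoc)
        also have "\<dots> = x \<otimes> (g \<otimes> y)"
        proof -
          have e: "y \<otimes> g = g \<otimes> y" using y g by blast
          show ?thesis by (simp only: e)
        qed
        also have "\<dots> = (x \<otimes> g) \<otimes> y" using xc gc by (simp add: m_assoc)
        also have "\<dots> = (g \<otimes> x) \<otimes> y"
        proof -
          have e: "x \<otimes> g = g \<otimes> x" using x g by blast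
          show ?thesis by (simp only: e)
        qed
        finally show "x \<otimes> y \<otimes> g = g \<otimes> (x \<otimes> y)" using xc gc by (simp add: m_assoc)
      qed
    qed
  next
    fix x n assume x: "x \<in> carrier G" and n: "n \<in> ?C"
    have nc: "n \<in> carrier G" using n Nc by auto
    show "x \<otimes> n \<otimes> inv x \<in> ?C"
    proof (clarify, intro conjI ballI)
      show "x \<otimes> n \<otimes> inv x \<in> N" using Nconj x n by auto
      fix g assume g: "g \<in> ?D"
      have gc: "g \<in> carrier G" using g Dc by auto
      have g': "inv (inv x) \<otimes> g \<otimes> inv x \<in> ?D" using delta_values_conj[OF g inv_closed[OF x]] .
      then have g'': "x \<otimes> g \<otimes> inv x \<in> ?D" using x by simp
      have comm: "n \<otimes> (x \<otimes> g \<otimes> inv x) = (x \<otimes> g \<otimes> inv x) \<otimes> n" using n g'' by blast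
      have "x \<otimes> n \<otimes> inv x \<otimes> g = x \<otimes> (n \<otimes> (inv x \<otimes> g \<otimes> x)) \<otimes> inv x"
        using x nc gc by (simp add: m_assoc)
      also have "\<dots> = x \<otimes> ((inv x \<otimes> g \<otimes> x) \<otimes> n) \<otimes> inv x"
      proof -
        have "inv x \<otimes> g \<otimes> x \<in> ?D" using delta_values_conj[OF g x] .
        then have e: "n \<otimes> (inv x \<otimes> g \<otimes> x) = (inv x \<otimes> g \<otimes> x) \<otimes> n" using n by blast
        show ?thesis by (simp only: e)
      qed
      also have "\<dots> = g \<otimes> (x \<otimes> n \<otimes> inv x)"
        using x nc gc by (simp add: m_assoc)
      finally show "x \<otimes> n \<otimes> inv x \<otimes> g = g \<otimes> (x \<otimes> n \<otimes> inv x)" .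
    qed
  qed
  have "?C \<subseteq> N" by auto
  then have "?C = {\<one>} \<or> ?C = N" using mn Cn by (simp add: minimal_normal_def)
  then have CN: "?C = N" using aC a(3) by auto
  let ?Z = "{h \<in> carrier G. \<forall>n\<in>N. n \<otimes> h = h \<otimes> n}"
  have "?D \<subseteq> ?Z"
  proof
    fix g assume g: "g \<in> ?D"
    have "\<forall>n\<in>N. n \<otimes> g = g \<otimes> n"
    proof
      fix n assume "n \<in> N" then have "n \<in> ?C" using CN by simp
      then show "n \<otimes> g = g \<otimes> n" using g by blast
    qed
    then show "g \<in> ?Z" using g Dc by auto
  qed
  then have "generate G ?D \<subseteq> ?Z" using generate_subgroup_incl centralizer_sub[OF Nc] by blast
  then have "derived_term G k \<subseteq> ?Z" using derived_sub_gen by blast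
  then show ?thesis by blast
qed

lemma main_ind:
  assumes mn: "minimal_normal N G"
  shows "N \<inter> delta_values G (Suc j) \<subseteq> {\<one>} \<Longrightarrow> \<forall>n\<in>N. \<forall>h\<in>derived_term G j. n \<otimes> h = h \<otimes> n"
proof (induction j)
  case 0
  have nN: "N \<lhd> G" using mn by (simp add: minimal_normal_def)
  have sN: "subgroup N G" using nN normal_imp_subgroup by blast
  have "N \<noteq> {\<one>}" using mn by (simp add: minimal_normal_def)
  moreover have "\<one> \<in> N" using subgroup.one_closed[OF sN] .
  ultimately obtain a where a: "a \<in> N" "a \<noteq> \<one>" by blast
  have "a \<in> delta_values G 0" using a subgroup.subset[OF sN] delta_values_0 by auto
  then show ?case using key_step[OF mn 0 a(1) _ a(2)] by blast
next
  case (Suc j)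
  show ?case
  proof (cases "\<exists>a. a \<in> N \<and> a \<in> delta_values G (Suc j) \<and> a \<noteq> \<one>")
    case True
    then obtain a where "a \<in> N" "a \<in> delta_values G (Suc j)" "a \<noteq> \<one>" by blast
    then show ?thesis using key_step[OF mn Suc.prems] by blast
  next
    case False
    then have "N \<inter> delta_values G (Suc j) \<subseteq> {\<one>}" by blast
    then have IH: "\<forall>n\<in>N. \<forall>h\<in>derived_term G j. n \<otimes> h = h \<otimes> n" by (rule Suc.IH)
    have "derived_term G (Suc j) = derived G (derived_term G j)" by (simp add: derived_term_def)
    also have "\<dots> \<subseteq> derived_term G j"
      unfolding derived_term_def
      by (rule derived_incl[OF subset_refl exp_of_derived_is_subgroup[OF subgroup_self]])
    finally show ?thesis using IH by blast
  qed
qed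

end

theorem lemma1p3:
  fixes G :: "('a, 'b) monoid_scheme" and N :: "'a set" and i :: nat
  assumes "group G"
    and "finite (carrier G)"
    and "minimal_normal N G"
    and "i \<ge> 1"
    and "N \<inter> delta_values G i \<subseteq> {\<one>\<^bsub>G\<^esub>}"
  shows "comm_subgroup G N (derived_term G (i - 1)) = {\<one>\<^bsub>G\<^esub>}"
proof -
  interpret group G by (rule assms(1))
  have i: "i = Suc (i - 1)" using assms(4) by simp
  have C: "\<forall>n\<in>N. \<forall>h\<in>derived_term G (i - 1). n \<otimes>\<^bsub>G\<^esub> h = h \<otimes>\<^bsub>G\<^esub> n"
    by (rule main_ind[OF assms(3)]) (use assms(5) i in simp)
  have nN: "N \<lhd> G" using assms(3) by (simp add: minimal_normal_def)
  then have sN: "subgroup N G" by (rule normal_imp_subgroup)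
  have Nc: "N \<subseteq> carrier G" using sN subgroup.subset by blast
  have Dc: "derived_term G (i - 1) \<subseteq> carrier G"
    unfolding derived_term_def using exp_of_derived_in_carrier by blast
  have S: "{grp_comm G a b | a b. a \<in> N \<and> b \<in> derived_term G (i - 1)} \<subseteq> {\<one>\<^bsub>G\<^esub>}"
  proof clarify
    fix a b assume ab: "a \<in> N" "b \<in> derived_term G (i - 1)"
    then show "grp_comm G a b = \<one>\<^bsub>G\<^esub>" using C Nc Dc comm_imp_one by blast
  qed
  have "comm_subgroup G N (derived_term G (i - 1)) \<subseteq> {\<one>\<^bsub>G\<^esub>}"
    unfolding comm_subgroup_def using generate_subgroup_incl[OF S triv_subgroup] .
  moreover have "\<one>\<^bsub>G\<^esub> \<in> comm_subgroup G N (derived_term G (i - 1))"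
    unfolding comm_subgroup_def by (rule generate.one)
  ultimately show ?thesis by blast
qed

end
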